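(* Let $I\ge 1$ and let $\Delta_{>0}=\{P=(p_{i,j})_{1\le i,j\le I}: p_{i,j}>0,\ \sum_{i,j}p_{i,j}=1\}$. Then $\mathcal{M}_2\cap\Delta_{>0}\subseteq\mathcal{M}_1\cap\Delta_{>0}$.
   Context: $\mathcal{M}_1$ is the set of $I\times I$ matrices $P$ with non-negative entries summing to $1$ such that there exist non-negative vectors $\zeta^{(r)},\zeta^{(c)},\zeta^{(\gamma)}\in\mathbb{R}^I_{\ge 0}$ with $p_{i,j}=\zeta^{(r)}_i\zeta^{(c)}_j$ for $i\ne j$ and $p_{i,i}=\zeta^{(r)}_i\zeta^{(c)}_i\zeta^{(\gamma)}_i$. $\mathcal{M}_2$ is the set of $I\times I$ matrices of the form $P=\alpha cr^t+(1-\alpha)D$, where $r,c\in\mathbb{R}^I_{\ge0}$ each have entries summing to $1$, $D=\mathrm{diag}(d_1,\dots,d_I)$ with $d_i\ge0$ and $\sum_i d_i=1$, and $\alpha\in[0,1]$. *)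

theory Defs
  imports Main "HOL-Analysis.Analysis"
begin

text \<open>Matrices indexed by a finite nonempty type 'i (so I = CARD('i) \<ge> 1),
  represented as functions 'i \<Rightarrow> 'i \<Rightarrow> real, P i j = p_{i,j}.\<close>

definition M1 :: "('i::finite \<Rightarrow> 'i \<Rightarrow> real) set" where
  "M1 = {P. (\<forall>i j. P i j \<ge> 0) \<and> (\<Sum>i\<in>UNIV. \<Sum>j\<in>UNIV. P i j) = 1 \<and>
      (\<exists>zr zc zg :: 'i \<Rightarrow> real. (\<forall>i. zr i \<ge> 0 \<and> zc i \<ge> 0 \<and> zg i \<ge> 0) \<and>
         (\<forall>i j. i \<noteq> j \<longrightarrow> P i j = zr i * zc j) \<and>
         (\<forall>i. P i i = zr i * zc i * zg i))}"

definition M2 :: "('i::finite \<Rightarrow> 'i \<Rightarrow> real) set" where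
  "M2 = {P. \<exists>(r :: 'i \<Rightarrow> real) (c :: 'i \<Rightarrow> real) (d :: 'i \<Rightarrow> real) (\<alpha> :: real).
      (\<forall>i. r i \<ge> 0) \<and> sum r UNIV = 1 \<and>
      (\<forall>i. c i \<ge> 0) \<and> sum c UNIV = 1 \<and>
      (\<forall>i. d i \<ge> 0) \<and> sum d UNIV = 1 \<and>
      0 \<le> \<alpha> \<and> \<alpha> \<le> 1 \<and>
      (\<forall>i j. P i j = \<alpha> * (c i * r j) + (1 - \<alpha>) * (if i = j then d i else 0))}"

definition Delta_pos :: "('i::finite \<Rightarrow> 'i \<Rightarrow> real) set" where
  "Delta_pos = {P. (\<forall>i j. P i j > 0) \<and> (\<Sum>i\<in>UNIV. \<Sum>j\<in>UNIV. P i j) = 1}"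

end

theory Submission
  imports Defs
begin

theorem proposition3p7:
  shows "(M2 \<inter> Delta_pos :: ('i::finite \<Rightarrow> 'i \<Rightarrow> real) set) \<subseteq> M1 \<inter> Delta_pos"
proof
  fix P :: "'i \<Rightarrow> 'i \<Rightarrow> real"
  assume A: "P \<in> M2 \<inter> Delta_pos"
  then have pos: "\<And>i j. P i j > 0" and s: "(\<Sum>i\<in>UNIV. \<Sum>j\<in>UNIV. P i j) = 1"
    by (auto simp: Delta_pos_def)
  from A obtain r c d and \<alpha> :: real where
    r: "\<forall>i. r i \<ge> 0" and c: "\<forall>i. c i \<ge> 0" and al: "0 \<le> \<alpha>"
    and Pd: "\<forall>i j. P i j = \<alpha> * (c i * r j) + (1 - \<alpha>) * (if i = j then d i else 0)"
    unfolding M2_def by blast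
  have "\<exists>zr zc zg :: 'i \<Rightarrow> real. (\<forall>i. zr i \<ge> 0 \<and> zc i \<ge> 0 \<and> zg i \<ge> 0) \<and>
         (\<forall>i j. i \<noteq> j \<longrightarrow> P i j = zr i * zc j) \<and>
         (\<forall>i. P i i = zr i * zc i * zg i)"
  proof (cases "\<forall>i j::'i. i = j")
    case True
    have "(\<forall>i. (1::real) \<ge> 0 \<and> (1::real) \<ge> 0 \<and> P i i \<ge> 0) \<and>
         (\<forall>i j. i \<noteq> j \<longrightarrow> P i j = 1 * 1) \<and>
         (\<forall>i. P i i = 1 * 1 * P i i)"
      using True pos by (simp add: less_imp_le)
    then show ?thesis by (intro exI[of _ "\<lambda>_. 1"] exI[of _ "\<lambda>i. P i i"])
  next
    case False
    then obtain a b :: 'i where ab: "a \<noteq> b" by blast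
    have other: "\<exists>j. j \<noteq> i" for i :: 'i using ab by metis
    have off: "P i j = \<alpha> * (c i * r j)" if "i \<noteq> j" for i j
      using Pd that by simp
    have cr: "\<alpha> > 0 \<and> c i > 0 \<and> r i > 0" for i
    proof -
      obtain j where j: "j \<noteq> i" using other by blast
      have 1: "\<alpha> * (c i * r j) > 0" using off[of i j] pos[of i j] j by simp
      have 2: "\<alpha> * (c j * r i) > 0" using off[of j i] pos[of j i] j by simp
      have "\<alpha> \<noteq> 0" "c i \<noteq> 0" "r i \<noteq> 0" using 1 2 by auto
      then show ?thesis
        using al c r by (simp add: less_le)
    qed
    define zg where "zg i = P i i / (\<alpha> * c i * r i)" for i
    have g1: "\<forall>i. \<alpha> * c i \<ge> 0 \<and> r i \<ge> 0 \<and> zg i \<ge> 0"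
      using cr pos unfolding zg_def by (simp add: less_imp_le)
    have g2: "\<forall>i j. i \<noteq> j \<longrightarrow> P i j = \<alpha> * c i * r j"
      using off by (simp add: mult.assoc)
    have g3: "\<forall>i. P i i = \<alpha> * c i * r i * zg i"
    proof
      fix i
      have "\<alpha> * c i * r i \<noteq> 0" using cr[of i] by simp
      then show "P i i = \<alpha> * c i * r i * zg i" unfolding zg_def by simp
    qed
    show ?thesis
      apply (rule exI[of _ "\<lambda>i. \<alpha> * c i"], rule exI[of _ r], rule exI[of _ zg])
      using g1 g2 g3 by blast
  qed
  then show "P \<in> M1 \<inter> Delta_pos"
  proof -
    have "\<forall>i j. P i j \<ge> 0" using pos by (simp add: less_imp_le)
    then have "P \<in> M1" unfolding M1_def using s \<open>\<exists>zr zc zg. _\<close> by (simp only: mem_Collect_eq) blast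
    then show ?thesis using A by blast
  qed
qed

end
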